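(* Let $(w_{n,k})_{n,k\ge0}$ be an array of complex numbers such that, for some constants $L,M$: (i) $w_{n,k}=0$ for $k>n$; (ii) $\lim_{n\to\infty} w_{n,k}=1$ for every $k\ge0$; (iii) $|w_{n,k}|\le M$ for all $n,k\ge0$; (iv) $|w_{n,k}-w_{n,k+1}|\le L/n$ for all $n,k\ge0$ (with $n\ge1$). Given $f\in\mathrm{Hol}(\mathbb D)$, $f(z)=\sum_{k=0}^\infty a_kz^k$, set $p_n(z):=\sum_{k=0}^n w_{n,k}a_kz^k$. Then for every positive finite Borel measure $\mu$ on $\overline{\mathbb D}$ such that $f\in\mathcal D_\mu$, we have $\|f-p_n\|_{\mathcal D_\mu}\to0$ as $n\to\infty$.
   Context: $\mathbb D$ is the open unit disk, $\mathrm{Hol}(\mathbb D)$ the holomorphic functions on $\mathbb D$, and $H^2$ the Hardy space with $\|\sum b_kz^k\|_{H^2}^2=\sum|b_k|^2$. For $\zeta\in\overline{\mathbb D}$, $\mathcal D_\zeta$ is the set of $f\in\mathrm{Hol}(\mathbb D)$ of the form $f(z)=a+(z-\zeta)g(z)$ with $g\in H^2$, $a\in\mathbb C$; for such $f$ set $\mathcal D_\zeta(f):=\|g\|_{H^2}^2$, and set $\mathcal D_\zeta(f):=\infty$ if $f\notin\mathcal D_\zeta$. For a positive finite Borel measure $\mu$ on $\overline{\mathbb D}$, $\mathcal D_\mu(f):=\int_{\overline{\mathbb D}}\mathcal D_\zeta(f)\,d\mu(\zeta)$, $\mathcal D_\mu$ is the set of $f\in\mathrm{Hol}(\mathbb D)$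 with $\mathcal D_\mu(f)<\infty$, normed by $\|f\|_{\mathcal D_\mu}^2:=|f(0)|^2+\mathcal D_\mu(f)$. *)

theory Defs
  imports "HOL-Analysis.Analysis"
begin

definition taylor_coeff :: "(complex \<Rightarrow> complex) \<Rightarrow> nat \<Rightarrow> complex" where
  "taylor_coeff f k = (deriv ^^ k) f 0 / of_nat (fact k)"

definition in_H2 :: "(complex \<Rightarrow> complex) \<Rightarrow> bool" where
  "in_H2 g \<longleftrightarrow> g holomorphic_on ball 0 1 \<and> summable (\<lambda>k. (norm (taylor_coeff g k))\<^sup>2)"

definition H2_normsq :: "(complex \<Rightarrow> complex) \<Rightarrow> real" where
  "H2_normsq g = (\<Sum>k. (norm (taylor_coeff g k))\<^sup>2)"

text \<open>Local Dirichlet integral D_zeta(f): \|g\|^2 where f(z) = a + (z - zeta) g(z) on the disk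
  with g in H^2 (g is uniquely determined); infinity (Inf of the empty set) if no such representation.\<close>
definition local_dirichlet :: "complex \<Rightarrow> (complex \<Rightarrow> complex) \<Rightarrow> ennreal" where
  "local_dirichlet \<zeta> f =
     (INF g \<in> {g. in_H2 g \<and> (\<exists>a. \<forall>z\<in>ball 0 1. f z = a + (z - \<zeta>) * g z)}. ennreal (H2_normsq g))"

definition dirichlet_mu :: "complex measure \<Rightarrow> (complex \<Rightarrow> complex) \<Rightarrow> ennreal" where
  "dirichlet_mu \<mu> f = (\<integral>\<^sup>+ \<zeta>. local_dirichlet \<zeta> f \<partial>\<mu>)"

definition Dmu_normsq :: "complex measure \<Rightarrow> (complex \<Rightarrow> complex) \<Rightarrow> ennreal" where
  "Dmu_normsq \<mu> f = ennreal ((norm (f 0))\<^sup>2) + dirichlet_mu \<mu> f"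

end

theory Submission
  imports Defs "HOL-Complex_Analysis.Complex_Analysis"
begin

lemma nn_integral_cmult_le:
  fixes G :: "'a \<Rightarrow> ennreal" and c :: ennreal
  assumes c: "0 < c" "c < \<infinity>"
  shows "(\<integral>\<^sup>+x. c * G x \<partial>M) \<le> c * integral\<^sup>N M G"
  unfolding nn_integral_def[of M "\<lambda>x. c * G x"]
proof (rule SUP_least)
  fix s assume "s \<in> {g. simple_function M g \<and> g \<le> (\<lambda>x. c * G x)}"
  then have s: "simple_function M s" "\<And>x. s x \<le> c * G x" by (auto simp: le_fun_def)
  define s' where "s' = (\<lambda>x. s x / c)"
  have s'_simple: "simple_function M s'"
    unfolding s'_def using simple_function_compose[OF s(1), of "\<lambda>y. y / c"] by (simp add: o_def)
  have "s' x \<le> G x" for x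
    using s(2)[of x] c unfolding s'_def
    by (metis divide_le_posI_ennreal mult.commute not_less_zero order.strict_implies_not_eq)
  then have "integral\<^sup>N M s' \<le> integral\<^sup>N M G" by (intro nn_integral_mono) auto
  moreover have "s x = c * s' x" for x
    unfolding s'_def using c ennreal_mult_divide_eq[of c "s x"] by (simp add: ennreal_times_divide mult.commute)
  then have "s = (\<lambda>x. c * s' x)" by auto
  then have "integral\<^sup>S M s = c * integral\<^sup>S M s'"
    using s'_simple simple_integral_mult by auto
  ultimately show "integral\<^sup>S M s \<le> c * integral\<^sup>N M G"
    using s'_simple by (simp add: nn_integral_eq_simple_integral mult_left_mono)
qed

lemma inner_dom_conv:
  fixes F :: "nat \<Rightarrow> 'a \<Rightarrow> ennreal" and G :: "'a \<Rightarrow> ennreal"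
  assumes G: "integral\<^sup>N M G < \<infinity>"
    and dom: "\<And>n x. x \<in> space M \<Longrightarrow> F n x \<le> G x"
    and lim: "\<And>x. x \<in> space M \<Longrightarrow> G x < \<infinity> \<Longrightarrow> (\<lambda>n. F n x) \<longlonglongrightarrow> 0"
  shows "(\<lambda>n. integral\<^sup>N M (F n)) \<longlonglongrightarrow> 0"
proof -
  define F' where "F' n x = F n x * indicator (space M) x" for n x
  define G' where "G' x = G x * indicator (space M) x" for x
  have F'eq: "integral\<^sup>N M (F n) = integral\<^sup>N M (F' n)" for n
    unfolding F'_def by (intro nn_integral_cong) auto
  have G'eq: "integral\<^sup>N M G' = integral\<^sup>N M G"
    unfolding G'_def by (intro nn_integral_cong) auto
  have F'G': "F' n x \<le> G' x" for n x
    using dom[of x n] unfolding F'_def G'_def by (auto simp: indicator_def)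
  have F'fin: "integral\<^sup>N M (F' n) \<noteq> \<infinity>" for n
  proof -
    have "integral\<^sup>N M (F' n) \<le> integral\<^sup>N M G'" using F'G' by (intro nn_integral_mono) auto
    then show ?thesis using G G'eq by (auto simp: top_unique)
  qed
  have "\<exists>s. simple_function M s \<and> s \<le> F' n \<and>
          integral\<^sup>N M (F' n) < integral\<^sup>S M s + ennreal (1 / real (Suc n))" for n
  proof -
    have "\<exists>s\<in>{g. simple_function M g \<and> g \<le> F' n}.
            integral\<^sup>N M (F' n) < integral\<^sup>S M s + ennreal (1 / real (Suc n))"
      by (rule SUP_approx_ennreal[OF _ _ nn_integral_def F'fin])
         (auto intro!: exI[of _ "\<lambda>_. 0"] simp: le_fun_def)
    then show ?thesis by auto
  qed
  then obtain s where s_simple: "\<And>n. simple_function M (s n)" and s_le: "\<And>n. s n \<le> F' n"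
    and s_approx: "\<And>n. integral\<^sup>N M (F' n) < integral\<^sup>S M (s n) + ennreal (1 / real (Suc n))"
    by metis
  have s_meas[measurable]: "s n \<in> borel_measurable M" for n
    using s_simple by (rule borel_measurable_simple_function)
  define t where "t n x = (SUP m\<in>{n..}. s m x)" for n x
  have t_meas[measurable]: "t n \<in> borel_measurable M" for n
    unfolding t_def by measurable
  have t_dec: "decseq t"
    unfolding t_def by (intro decseq_SucI le_funI SUP_subset_mono) auto
  have s_t: "s n x \<le> t n x" for n x
    unfolding t_def by (intro SUP_upper) auto
  have t_G: "t n x \<le> G' x" for n x
    unfolding t_def using s_le F'G' by (intro SUP_least) (meson le_fun_def order_trans)
  have t_fin: "integral\<^sup>N M (t n) < \<infinity>" for n
  proof -
    have "integral\<^sup>N M (t n) \<le> integral\<^sup>N M G'" using t_G by (intro nn_integral_mono) auto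
    then show ?thesis using G G'eq by auto
  qed
  have Lim: "(\<integral>\<^sup>+ x. (INF n. t n x) \<partial>M) = (INF n. integral\<^sup>N M (t n))"
    by (rule nn_integral_monotone_convergence_INF_decseq[OF t_dec t_meas t_fin])
  define E where "E = {x \<in> space M. (INF n. t n x) \<noteq> 0}"
  have E_sets: "E \<in> sets M" unfolding E_def by measurable
  have E_G: "G x = \<infinity>" if "x \<in> E" for x
  proof (rule ccontr)
    assume "G x \<noteq> \<infinity>"
    then have xs: "x \<in> space M" and Gx: "G x < \<infinity>" using that by (auto simp: E_def top.not_eq_extremum)
    have "(\<lambda>n. F n x) \<longlonglongrightarrow> 0" using lim[OF xs Gx] .
    then have "limsup (\<lambda>n. F n x) = 0" by (intro lim_imp_Limsup) auto
    moreover have "limsup (\<lambda>n. s n x) \<le> limsup (\<lambda>n. F n x)"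
      using s_le xs by (intro Limsup_mono always_eventually allI) (metis F'_def indicator_simps(1) le_fun_def mult.right_neutral)
    ultimately have "limsup (\<lambda>n. s n x) = 0" by auto
    then have "(INF n. t n x) = 0" unfolding t_def limsup_INF_SUP by simp
    then show False using that by (auto simp: E_def)
  qed
  have "emeasure M E = 0"
  proof -
    have "\<infinity> * emeasure M E = (\<integral>\<^sup>+ x. \<infinity> * indicator E x \<partial>M)"
      using E_sets by (simp add: nn_integral_cmult_indicator)
    also have "\<dots> \<le> integral\<^sup>N M G"
      using E_G by (intro nn_integral_mono) (auto simp: indicator_def)
    finally have "\<infinity> * emeasure M E < \<infinity>" using G by auto
    then show ?thesis by (auto simp: ennreal_mult_less_top)
  qed
  then have "AE x in M. (INF n. t n x) = 0"
    using E_sets unfolding E_def by (intro AE_I[of _ _ E]) (auto simp: E_def)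
  then have "(\<integral>\<^sup>+ x. (INF n. t n x) \<partial>M) = (\<integral>\<^sup>+ x. 0 \<partial>M)"
    by (rule nn_integral_cong_AE)
  then have "(\<integral>\<^sup>+ x. (INF n. t n x) \<partial>M) = 0" by simp
  with Lim have "(INF n. integral\<^sup>N M (t n)) = 0" by simp
  moreover have "decseq (\<lambda>n. integral\<^sup>N M (t n))"
    unfolding t_def by (intro decseq_SucI nn_integral_mono SUP_subset_mono) auto
  ultimately have tlim: "(\<lambda>n. integral\<^sup>N M (t n)) \<longlonglongrightarrow> 0"
    using LIMSEQ_INF by metis
  have elim: "(\<lambda>n. ennreal (1 / real (Suc n))) \<longlonglongrightarrow> 0"
  proof -
    have "(\<lambda>n. 1 / real (Suc n)) \<longlonglongrightarrow> 0"
      using LIMSEQ_inverse_real_of_nat by (simp add: inverse_eq_divide)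
    then have "(\<lambda>n. ennreal (1 / real (Suc n))) \<longlonglongrightarrow> ennreal 0" by (rule tendsto_ennrealI)
    then show ?thesis by simp
  qed
  have sumlim0: "(\<lambda>n. integral\<^sup>N M (t n) + ennreal (1 / real (Suc n))) \<longlonglongrightarrow> 0 + 0"
    by (intro tendsto_add tlim elim)
  have sumlim: "(\<lambda>n. integral\<^sup>N M (t n) + ennreal (1 / real (Suc n))) \<longlonglongrightarrow> 0"
    using sumlim0 by simp
  have le: "integral\<^sup>N M (F' n) \<le> integral\<^sup>N M (t n) + ennreal (1 / real (Suc n))" for n
  proof -
    have "integral\<^sup>S M (s n) = integral\<^sup>N M (s n)"
      using s_simple by (simp add: nn_integral_eq_simple_integral)
    also have "\<dots> \<le> integral\<^sup>N M (t n)" using s_t by (intro nn_integral_mono) auto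
    finally show ?thesis using s_approx[of n] by (meson add_right_mono less_imp_le order_trans)
  qed
  have "(\<lambda>n. integral\<^sup>N M (F' n)) \<longlonglongrightarrow> 0"
    by (rule tendsto_sandwich[OF always_eventually always_eventually tendsto_const sumlim])
       (use le in auto)
  then show ?thesis unfolding F'eq .
qed


definition sE :: "(nat \<Rightarrow> nat \<Rightarrow> complex) \<Rightarrow> nat \<Rightarrow> complex \<Rightarrow> (nat \<Rightarrow> complex) \<Rightarrow> nat \<Rightarrow> complex" where
  "sE w n z b i = (\<Sum>k=i..n. (w n (Suc k) - w n k) * b k * z ^ (k - i))"

definition eE :: "(nat \<Rightarrow> nat \<Rightarrow> complex) \<Rightarrow> nat \<Rightarrow> complex \<Rightarrow> (nat \<Rightarrow> complex) \<Rightarrow> nat \<Rightarrow> complex" where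
  "eE w n z b i = (1 - w n i) * b i - sE w n z b i"

lemma sE_big: "i > n \<Longrightarrow> sE w n z b i = 0"
  by (simp add: sE_def)

lemma eE_big: "(\<And>k. k > n \<Longrightarrow> w n k = 0) \<Longrightarrow> i > n \<Longrightarrow> eE w n z b i = b i"
  by (simp add: eE_def sE_big)

lemma eE_add: "eE w n z (\<lambda>k. x k + y k) i = eE w n z x i + eE w n z y i"
  by (simp add: eE_def sE_def sum.distrib[symmetric] algebra_simps)

lemma norm_diff_sq_le: "(norm (x - y :: complex))\<^sup>2 \<le> 2 * (norm x)\<^sup>2 + 2 * (norm y)\<^sup>2"
proof -
  have "norm (x - y) \<le> norm x + norm y" by (rule norm_triangle_ineq4)
  then have "(norm (x - y))\<^sup>2 \<le> (norm x + norm y)\<^sup>2" by (simp add: power_mono)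
  also have "\<dots> \<le> 2 * (norm x)\<^sup>2 + 2 * (norm y)\<^sup>2"
  proof -
    have "2 * (norm x)\<^sup>2 + 2 * (norm y)\<^sup>2 - (norm x + norm y)\<^sup>2 = (norm x - norm y)\<^sup>2"
      by (simp add: power2_eq_square algebra_simps)
    then show ?thesis by (smt (verit) zero_le_power2)
  qed
  finally show ?thesis .
qed

lemma sE_bound:
  assumes wlip: "\<And>k. norm (w n k - w n (Suc k)) \<le> L / real n"
    and n: "n \<ge> 1" and z: "norm z \<le> 1" and b: "summable (\<lambda>k. (norm (b k))\<^sup>2)"
  shows "(\<Sum>i\<le>n. (norm (sE w n z b i))\<^sup>2) \<le> 4 * L\<^sup>2 * (\<Sum>k. (norm (b k))\<^sup>2)"
proof -
  define S where "S = (\<Sum>k. (norm (b k))\<^sup>2)"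
  define T where "T = (\<Sum>k\<le>n. norm (b k))"
  have L0: "L \<ge> 0"
  proof -
    have "0 \<le> L / real n" using wlip[of 0] norm_ge_zero order_trans by blast
    then show ?thesis using n by (simp add: zero_le_divide_iff)
  qed
  have T0: "T \<ge> 0" unfolding T_def by (simp add: sum_nonneg)
  have d: "norm (w n (Suc k) - w n k) \<le> L / real n" for k
    using wlip[of k] by (simp add: norm_minus_commute)
  have TS: "T\<^sup>2 \<le> S * (n + 1)"
  proof -
    have "T\<^sup>2 \<le> (\<Sum>k\<le>n. (norm (b k))\<^sup>2) * card {..n}"
      unfolding T_def by (rule sum_squared_le_sum_of_squares)
    also have "(\<Sum>k\<le>n. (norm (b k))\<^sup>2) \<le> S"
      unfolding S_def by (rule sum_le_suminf[OF b]) auto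
    finally show ?thesis by (simp add: mult_right_mono)
  qed
  have si: "norm (sE w n z b i) \<le> L / real n * T" for i
  proof -
    have "norm (sE w n z b i) \<le> (\<Sum>k=i..n. norm ((w n (Suc k) - w n k) * b k * z ^ (k - i)))"
      unfolding sE_def by (rule norm_sum)
    also have "\<dots> \<le> (\<Sum>k=i..n. L / real n * norm (b k))"
    proof (rule sum_mono)
      fix k
      have "norm (z ^ (k - i)) \<le> 1" using z by (simp add: norm_power power_le_one)
      then have "norm ((w n (Suc k) - w n k) * b k * z ^ (k - i)) \<le> norm (w n (Suc k) - w n k) * norm (b k) * 1"
        unfolding norm_mult by (intro mult_left_mono) auto
      also have "\<dots> \<le> L / real n * norm (b k)" using mult_right_mono[OF d[of k], of "norm (b k)"] by simp
      finally show "norm ((w n (Suc k) - w n k) * b k * z ^ (k - i)) \<le> L / real n * norm (b k)" .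
    qed
    also have "\<dots> \<le> (\<Sum>k\<le>n. L / real n * norm (b k))"
      by (rule sum_mono2) (auto simp: L0)
    also have "\<dots> = L / real n * T" unfolding T_def by (simp add: sum_distrib_left)
    finally show ?thesis .
  qed
  have si2: "(norm (sE w n z b i))\<^sup>2 \<le> (L / real n)\<^sup>2 * (S * (n + 1))" for i
  proof -
    have "(norm (sE w n z b i))\<^sup>2 \<le> (L / real n * T)\<^sup>2" using si[of i] by (simp add: power_mono)
    also have "\<dots> = (L / real n)\<^sup>2 * T\<^sup>2" by (rule power_mult_distrib)
    also have "\<dots> \<le> (L / real n)\<^sup>2 * (S * (n + 1))" using TS by (simp add: mult_left_mono)
    finally show ?thesis .
  qed
  have "(\<Sum>i\<le>n. (norm (sE w n z b i))\<^sup>2) \<le> (\<Sum>i\<le>n. (L / real n)\<^sup>2 * (S * (n + 1)))"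
    by (rule sum_mono) (rule si2)
  also have "\<dots> = (real n + 1) * ((L / real n)\<^sup>2 * (S * (n + 1)))"
    by simp
  also have "\<dots> = ((real n + 1) / real n)\<^sup>2 * L\<^sup>2 * S"
    by (simp add: power2_eq_square power_divide)
  also have "\<dots> \<le> 4 * L\<^sup>2 * S"
  proof -
    have S0: "S \<ge> 0" unfolding S_def using b by (simp add: suminf_nonneg)
    have "(real n + 1) / real n \<le> 2" using n by (simp add: field_simps)
    moreover have "0 \<le> (real n + 1) / real n" by simp
    ultimately have "((real n + 1) / real n)\<^sup>2 \<le> 2\<^sup>2" by (rule power_mono)
    then show ?thesis using S0 by (simp add: mult_right_mono)
  qed
  finally show ?thesis unfolding S_def .
qed

lemma eE_bound:
  assumes wz: "\<And>k. k > n \<Longrightarrow> w n k = 0"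
    and wb: "\<And>k. norm (w n k) \<le> M"
    and wlip: "\<And>k. norm (w n k - w n (Suc k)) \<le> L / real n"
    and n: "n \<ge> 1" and z: "norm z \<le> 1" and b: "summable (\<lambda>k. (norm (b k))\<^sup>2)"
  shows "summable (\<lambda>i. (norm (eE w n z b i))\<^sup>2)"
    and "(\<Sum>i. (norm (eE w n z b i))\<^sup>2) \<le> (2 * (1 + M)\<^sup>2 + 8 * L\<^sup>2) * (\<Sum>k. (norm (b k))\<^sup>2)"
proof -
  have ev: "eventually (\<lambda>i. (norm (eE w n z b i))\<^sup>2 = (norm (b i))\<^sup>2) sequentially"
    using eventually_gt_at_top[of n] by eventually_elim (simp add: eE_big wz)
  show sum1: "summable (\<lambda>i. (norm (eE w n z b i))\<^sup>2)"
    using summable_cong[OF ev] b by simp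
  define s2 where "s2 i = (if i \<le> n then (norm (sE w n z b i))\<^sup>2 else 0)" for i
  have M0: "M \<ge> 0" using wb[of 0] norm_ge_zero order_trans by blast
  have pt: "(norm (eE w n z b i))\<^sup>2 \<le> 2 * (1 + M)\<^sup>2 * (norm (b i))\<^sup>2 + 2 * s2 i" for i
  proof -
    have "(norm (eE w n z b i))\<^sup>2 \<le> 2 * (norm ((1 - w n i) * b i))\<^sup>2 + 2 * (norm (sE w n z b i))\<^sup>2"
      unfolding eE_def by (rule norm_diff_sq_le)
    also have "(norm (sE w n z b i))\<^sup>2 = s2 i" unfolding s2_def by (simp add: sE_big)
    also have "(norm ((1 - w n i) * b i))\<^sup>2 \<le> (1 + M)\<^sup>2 * (norm (b i))\<^sup>2"
    proof -
      have "norm (1 - w n i) \<le> 1 + M"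
        using norm_triangle_ineq4[of 1 "w n i"] wb[of i] by simp
      then have "(norm (1 - w n i))\<^sup>2 \<le> (1 + M)\<^sup>2" by (simp add: power_mono)
      then show ?thesis by (simp add: norm_mult power_mult_distrib mult_right_mono)
    qed
    finally show ?thesis by simp
  qed
  have sum_s2: "summable s2" "suminf s2 = (\<Sum>i\<le>n. (norm (sE w n z b i))\<^sup>2)"
  proof -
    show "suminf s2 = (\<Sum>i\<le>n. (norm (sE w n z b i))\<^sup>2)"
      by (subst suminf_finite[of "{..n}"]) (auto simp: s2_def)
    show "summable s2"
      by (rule summable_finite[of "{..n}"]) (auto simp: s2_def)
  qed
  have sb: "summable (\<lambda>i. 2 * (1 + M)\<^sup>2 * (norm (b i))\<^sup>2 + 2 * s2 i)"
    by (intro summable_add summable_mult sum_s2 b)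
  have "(\<Sum>i. (norm (eE w n z b i))\<^sup>2) \<le> (\<Sum>i. 2 * (1 + M)\<^sup>2 * (norm (b i))\<^sup>2 + 2 * s2 i)"
    by (rule suminf_le[OF pt sum1 sb])
  also have "\<dots> = 2 * (1 + M)\<^sup>2 * (\<Sum>k. (norm (b k))\<^sup>2) + 2 * suminf s2"
    by (subst suminf_add[symmetric]) (auto intro!: summable_mult sum_s2 b simp: suminf_mult[OF b] suminf_mult[OF sum_s2(1)])
  also have "\<dots> \<le> 2 * (1 + M)\<^sup>2 * (\<Sum>k. (norm (b k))\<^sup>2) + 2 * (4 * L\<^sup>2 * (\<Sum>k. (norm (b k))\<^sup>2))"
    unfolding sum_s2(2) using sE_bound[of w n L z b, OF wlip n z b] by simp
  also have "\<dots> = (2 * (1 + M)\<^sup>2 + 8 * L\<^sup>2) * (\<Sum>k. (norm (b k))\<^sup>2)"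
    by (simp add: algebra_simps)
  finally show "(\<Sum>i. (norm (eE w n z b i))\<^sup>2) \<le> (2 * (1 + M)\<^sup>2 + 8 * L\<^sup>2) * (\<Sum>k. (norm (b k))\<^sup>2)" .
qed

lemma norm_add_sq_le: "(norm (x + y :: complex))\<^sup>2 \<le> 2 * (norm x)\<^sup>2 + 2 * (norm y)\<^sup>2"
  using norm_diff_sq_le[of x "- y"] by simp

lemma eE_lim:
  assumes wz: "\<And>n k. k > n \<Longrightarrow> w n k = 0"
    and wb: "\<And>n k. norm (w n k) \<le> M"
    and wlip: "\<And>n k. n \<ge> 1 \<Longrightarrow> norm (w n k - w n (Suc k)) \<le> L / real n"
    and wlim: "\<And>k. (\<lambda>n. w n k) \<longlonglongrightarrow> 1"
    and z: "norm z \<le> 1" and b: "summable (\<lambda>k. (norm (b k))\<^sup>2)"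
  shows "(\<lambda>n. \<Sum>i. (norm (eE w n z b i))\<^sup>2) \<longlonglongrightarrow> 0"
proof (rule LIMSEQ_I)
  fix r :: real assume r: "r > 0"
  define C where "C = 2 * (1 + M)\<^sup>2 + 8 * L\<^sup>2"
  have C0: "C \<ge> 0" unfolding C_def by simp
  define S where "S = (\<Sum>k. (norm (b k))\<^sup>2)"
  define \<delta> where "\<delta> = r / (4 * (C + 1))"
  have \<delta>0: "\<delta> > 0" unfolding \<delta>_def using r C0 by simp
  have "(\<lambda>K. \<Sum>i<K. (norm (b i))\<^sup>2) \<longlonglongrightarrow> S"
    unfolding S_def by (rule summable_LIMSEQ[OF b])
  then have "eventually (\<lambda>K. S - \<delta> < (\<Sum>i<K. (norm (b i))\<^sup>2)) sequentially"
    by (rule order_tendstoD(1)) (use \<delta>0 in simp)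
  then obtain K where K: "S - \<delta> < (\<Sum>i<K. (norm (b i))\<^sup>2)"
    by (auto simp: eventually_sequentially)
  define bh where "bh i = (if i < K then b i else 0)" for i
  define bt where "bt i = (if i < K then 0 else b i)" for i
  have b_split: "b = (\<lambda>k. bh k + bt k)" by (auto simp: bh_def bt_def)
  have bt_summ: "summable (\<lambda>k. (norm (bt k))\<^sup>2)"
    by (rule summable_comparison_test'[OF b, of 0]) (auto simp: bt_def)
  have head_summ: "summable (\<lambda>k. if k < K then (norm (b k))\<^sup>2 else 0)"
    by (rule summable_finite[of "{..<K}"]) auto
  have "S = (\<Sum>k. (if k < K then (norm (b k))\<^sup>2 else 0) + (norm (bt k))\<^sup>2)"
    unfolding S_def by (intro suminf_cong) (auto simp: bt_def)
  also have "\<dots> = (\<Sum>k<K. (norm (b k))\<^sup>2) + (\<Sum>k. (norm (bt k))\<^sup>2)"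
    by (subst suminf_add[symmetric, OF head_summ bt_summ]) (simp, subst suminf_finite[of "{..<K}"], auto)
  finally have tail: "(\<Sum>k. (norm (bt k))\<^sup>2) < \<delta>" using K by simp
  have hz: "eE w n z bh i = 0" if "i \<ge> K" for n i
    using that by (simp add: eE_def sE_def bh_def)
  have hlim: "(\<lambda>n. eE w n z bh i) \<longlonglongrightarrow> 0" if "i < K" for i
  proof -
    have ev: "eventually (\<lambda>n. (1 - w n i) * b i - (\<Sum>k=i..<K. (w n (Suc k) - w n k) * b k * z ^ (k - i))
              = eE w n z bh i) sequentially"
      using eventually_ge_at_top[of K]
    proof eventually_elim
      case (elim n)
      have "sE w n z bh i = (\<Sum>k=i..<K. (w n (Suc k) - w n k) * bh k * z ^ (k - i))"
        unfolding sE_def using elim by (intro sum.mono_neutral_right) (auto simp: bh_def)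
      also have "\<dots> = (\<Sum>k=i..<K. (w n (Suc k) - w n k) * b k * z ^ (k - i))"
        by (intro sum.cong) (auto simp: bh_def)
      finally show ?case using that by (simp add: eE_def bh_def)
    qed
    have "(\<lambda>n. (1 - w n i) * b i - (\<Sum>k=i..<K. (w n (Suc k) - w n k) * b k * z ^ (k - i)))
            \<longlonglongrightarrow> (1 - 1) * b i - (\<Sum>k=i..<K. (1 - 1) * b k * z ^ (k - i))"
      by (intro tendsto_intros wlim)
    then have "(\<lambda>n. (1 - w n i) * b i - (\<Sum>k=i..<K. (w n (Suc k) - w n k) * b k * z ^ (k - i)))
            \<longlonglongrightarrow> 0" by simp
    then show ?thesis by (rule Lim_transform_eventually[OF _ ev])
  qed
  have "(\<lambda>n. \<Sum>i<K. (norm (eE w n z bh i))\<^sup>2) \<longlonglongrightarrow> (\<Sum>i<K. (norm (0::complex))\<^sup>2)"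
    by (intro tendsto_sum tendsto_power tendsto_norm hlim) simp
  then have "(\<lambda>n. \<Sum>i<K. (norm (eE w n z bh i))\<^sup>2) \<longlonglongrightarrow> 0" by simp
  then have "eventually (\<lambda>n. (\<Sum>i<K. (norm (eE w n z bh i))\<^sup>2) < r / 4) sequentially"
    by (rule order_tendstoD(2)) (use r in simp)
  then obtain N where N: "\<And>n. n \<ge> N \<Longrightarrow> (\<Sum>i<K. (norm (eE w n z bh i))\<^sup>2) < r / 4"
    by (auto simp: eventually_sequentially)
  show "\<exists>no. \<forall>n\<ge>no. norm ((\<Sum>i. (norm (eE w n z b i))\<^sup>2) - 0) < r"
  proof (intro exI allI impI)
    fix n assume n: "n \<ge> max N 1"
    have wz': "\<And>k. k > n \<Longrightarrow> w n k = 0" using wz .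
    have wl': "\<And>k. norm (w n k - w n (Suc k)) \<le> L / real n" using wlip n by auto
    have n1: "n \<ge> 1" using n by simp
    note bd_b = eE_bound[of n w M L z, OF wz' wb wl' n1 z b]
    note bd_t = eE_bound[of n w M L z, OF wz' wb wl' n1 z bt_summ]
    have h_summ: "summable (\<lambda>i. (norm (eE w n z bh i))\<^sup>2)"
      by (rule summable_finite[of "{..<K}"]) (auto simp: hz)
    have h_eq: "(\<Sum>i. (norm (eE w n z bh i))\<^sup>2) = (\<Sum>i<K. (norm (eE w n z bh i))\<^sup>2)"
      by (rule suminf_finite) (auto simp: hz)
    have pt: "(norm (eE w n z b i))\<^sup>2 \<le> 2 * (norm (eE w n z bh i))\<^sup>2 + 2 * (norm (eE w n z bt i))\<^sup>2" for i
    proof -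
      have "eE w n z b i = eE w n z bh i + eE w n z bt i"
        by (subst b_split) (rule eE_add)
      then show ?thesis using norm_add_sq_le by simp
    qed
    have "(\<Sum>i. (norm (eE w n z b i))\<^sup>2) \<le> (\<Sum>i. 2 * (norm (eE w n z bh i))\<^sup>2 + 2 * (norm (eE w n z bt i))\<^sup>2)"
    proof (rule suminf_le)
      show "summable (\<lambda>i. 2 * (norm (eE w n z bh i))\<^sup>2 + 2 * (norm (eE w n z bt i))\<^sup>2)"
        by (intro summable_add summable_mult h_summ bd_t(1))
    qed (use pt bd_b(1) in auto)
    also have "\<dots> = 2 * (\<Sum>i<K. (norm (eE w n z bh i))\<^sup>2) + 2 * (\<Sum>i. (norm (eE w n z bt i))\<^sup>2)"
      by (subst suminf_add[symmetric]) (auto intro!: summable_mult h_summ bd_t(1)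
          simp: suminf_mult[OF h_summ] suminf_mult[OF bd_t(1)] h_eq)
    also have "\<dots> < 2 * (r / 4) + 2 * (r / 4)"
    proof -
      have "(\<Sum>i. (norm (eE w n z bt i))\<^sup>2) \<le> C * (\<Sum>k. (norm (bt k))\<^sup>2)"
        using bd_t(2) unfolding C_def .
      also have "\<dots> \<le> C * \<delta>" using tail C0 by (simp add: mult_left_mono)
      also have "\<dots> \<le> r / 4"
        unfolding \<delta>_def using r C0 by (simp add: field_simps)
      finally show ?thesis using N[of n] n by simp
    qed
    finally have lt: "(\<Sum>i. (norm (eE w n z b i))\<^sup>2) < r" by simp
    have "0 \<le> (\<Sum>i. (norm (eE w n z b i))\<^sup>2)" using bd_b(1) by (simp add: suminf_nonneg)
    then show "norm ((\<Sum>i. (norm (eE w n z b i))\<^sup>2) - 0) < r" using lt by simp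
  qed
qed


lemma tc_fps: "f has_fps_expansion F \<Longrightarrow> taylor_coeff f k = fps_nth F k"
  unfolding taylor_coeff_def by (simp add: fps_nth_fps_expansion)

lemma rep_coeffs:
  assumes g: "g holomorphic_on ball 0 1" and rep: "\<forall>z\<in>ball 0 1. f z = a + (z - \<zeta>) * g z"
  shows "taylor_coeff f (Suc k) = taylor_coeff g k - \<zeta> * taylor_coeff g (Suc k)"
proof -
  define G where "G = fps_expansion g 0"
  have gG: "g has_fps_expansion G" unfolding G_def using g by (intro has_fps_expansion_fps_expansion) auto
  have e1: "(\<lambda>z. a + (z - \<zeta>) * g z) has_fps_expansion fps_const a + (fps_X - fps_const \<zeta>) * G"
    by (intro fps_expansion_intros gG)
  have e2: "eventually (\<lambda>z. a + (z - \<zeta>) * g z = f z) (nhds 0)"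
  proof -
    have "eventually (\<lambda>z. z \<in> ball 0 1) (nhds (0::complex))"
      by (intro eventually_nhds_in_open) auto
    then show ?thesis by eventually_elim (use rep in auto)
  qed
  have fF: "f has_fps_expansion fps_const a + (fps_X - fps_const \<zeta>) * G"
    using has_fps_expansion_cong[OF e2 refl] e1 by simp
  show ?thesis
    unfolding tc_fps[OF fF] tc_fps[OF gG] by (simp add: algebra_simps)
qed

lemma poly_id:
  fixes q c :: "nat \<Rightarrow> complex"
  assumes rec: "\<And>i. i \<le> n \<Longrightarrow> q i - \<zeta> * q (Suc i) = c (Suc i)" and qz: "q (Suc n) = 0"
  shows "(\<Sum>j\<le>Suc n. c j * z ^ j) = (c 0 + \<zeta> * q 0) + (z - \<zeta>) * (\<Sum>i\<le>n. q i * z ^ i)"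
proof -
  have 1: "(\<Sum>i\<le>n. c (Suc i) * z ^ Suc i) = (\<Sum>i\<le>n. q i * z ^ Suc i) - (\<Sum>i\<le>n. \<zeta> * q (Suc i) * z ^ Suc i)"
    by (simp add: sum_subtractf[symmetric] rec[symmetric] algebra_simps)
  have 2: "(\<Sum>j\<le>Suc n. \<zeta> * q j * z ^ j) = \<zeta> * q 0 + (\<Sum>i\<le>n. \<zeta> * q (Suc i) * z ^ Suc i)"
    by (subst sum.atMost_Suc_shift) simp
  have 3: "(\<Sum>j\<le>Suc n. \<zeta> * q j * z ^ j) = (\<Sum>j\<le>n. \<zeta> * q j * z ^ j)"
    using qz by simp
  have "(\<Sum>j\<le>Suc n. c j * z ^ j) = c 0 + (\<Sum>i\<le>n. c (Suc i) * z ^ Suc i)"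
    by (subst sum.atMost_Suc_shift) simp
  also have "\<dots> = c 0 + \<zeta> * q 0 + ((\<Sum>i\<le>n. q i * z ^ Suc i) - (\<Sum>j\<le>n. \<zeta> * q j * z ^ j))"
  proof -
    have 4: "(\<Sum>j\<le>n. \<zeta> * q j * z ^ j) = \<zeta> * q 0 + (\<Sum>i\<le>n. \<zeta> * q (Suc i) * z ^ Suc i)"
      using 2 3 by simp
    show ?thesis unfolding 4 1 by (simp add: algebra_simps)
  qed
  also have "(\<Sum>i\<le>n. q i * z ^ Suc i) - (\<Sum>j\<le>n. \<zeta> * q j * z ^ j) = (z - \<zeta>) * (\<Sum>i\<le>n. q i * z ^ i)"
    by (simp add: sum_distrib_left sum_subtractf[symmetric] algebra_simps)
  finally show ?thesis .
qed

lemma q_rec: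
  fixes b :: "nat \<Rightarrow> complex" and w :: "nat \<Rightarrow> nat \<Rightarrow> complex" and \<zeta> :: complex
  assumes i: "i \<le> n"
  defines "q \<equiv> \<lambda>i. w n i * b i + sE w n \<zeta> b i"
  shows "q i - \<zeta> * q (Suc i) = w n (Suc i) * (b i - \<zeta> * b (Suc i))"
proof -
  have "sE w n \<zeta> b i = (w n (Suc i) - w n i) * b i
        + (\<Sum>k=Suc i..n. (w n (Suc k) - w n k) * b k * \<zeta> ^ (k - i))"
    unfolding sE_def using i by (subst sum.atLeast_Suc_atMost) auto
  moreover have "\<zeta> * sE w n \<zeta> b (Suc i) = (\<Sum>k=Suc i..n. (w n (Suc k) - w n k) * b k * \<zeta> ^ (k - i))"
    unfolding sE_def sum_distrib_left
  proof (intro sum.cong refl)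
    fix k assume "k \<in> {Suc i..n}"
    then have "k - i = Suc (k - Suc i)" by auto
    then show "\<zeta> * ((w n (Suc k) - w n k) * b k * \<zeta> ^ (k - Suc i)) = (w n (Suc k) - w n k) * b k * \<zeta> ^ (k - i)"
      by (simp add: algebra_simps)
  qed
  ultimately show ?thesis unfolding q_def by (simp add: algebra_simps)
qed

lemma key:
  fixes w :: "nat \<Rightarrow> nat \<Rightarrow> complex" and f g :: "complex \<Rightarrow> complex" and \<zeta> a :: complex
  assumes wz: "\<And>k. k > n \<Longrightarrow> w n k = 0"
    and gH: "in_H2 g" and rep: "\<forall>z\<in>ball 0 1. f z = a + (z - \<zeta>) * g z"
  shows "\<exists>h. in_H2 h \<and> (\<exists>a'. \<forall>z\<in>ball 0 1.
             f z - (\<Sum>k\<le>n. w n k * taylor_coeff f k * z ^ k) = a' + (z - \<zeta>) * h z)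
           \<and> H2_normsq h = (\<Sum>i. (norm (eE w n \<zeta> (taylor_coeff g) i))\<^sup>2)"
proof -
  define b where "b = taylor_coeff g"
  define q where "q i = w n i * b i + sE w n \<zeta> b i" for i
  have qz: "q k = 0" if "k > n" for k using that wz by (simp add: q_def sE_big)
  define h where "h z = g z - (\<Sum>i\<le>n. q i * z ^ i)" for z
  have gh: "g holomorphic_on ball 0 1" and bs: "summable (\<lambda>k. (norm (b k))\<^sup>2)"
    using gH unfolding in_H2_def b_def by auto
  define G where "G = fps_expansion g 0"
  have gG: "g has_fps_expansion G" unfolding G_def using gh by (intro has_fps_expansion_fps_expansion) auto
  have hH: "h has_fps_expansion G - (\<Sum>i\<le>n. fps_const (q i) * fps_X ^ i)"
    unfolding h_def by (intro fps_expansion_intros gG)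
  have tch: "taylor_coeff h k = eE w n \<zeta> b k" for k
  proof -
    have sm: "(\<Sum>i\<le>n. q i * (if k = i then 1 else 0)) = (\<Sum>i\<le>n. if k = i then q i else 0)"
      by (intro sum.cong) auto
    have "taylor_coeff h k = b k - q k"
      unfolding tc_fps[OF hH] b_def tc_fps[OF gG] using qz[of k] by (simp add: fps_sum_nth sm)
    then show ?thesis by (simp add: eE_def q_def algebra_simps)
  qed
  have ev: "eventually (\<lambda>i. (norm (eE w n \<zeta> b i))\<^sup>2 = (norm (b i))\<^sup>2) sequentially"
    using eventually_gt_at_top[of n] by eventually_elim (simp add: eE_big wz)
  have hH2: "in_H2 h"
    unfolding in_H2_def tch
  proof
    show "h holomorphic_on ball 0 1" unfolding h_def by (intro holomorphic_intros gh)
    show "summable (\<lambda>k. (norm (eE w n \<zeta> b k))\<^sup>2)" using summable_cong[OF ev] bs by simp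
  qed
  define c where "c j = w n j * taylor_coeff f j" for j
  have rec: "q i - \<zeta> * q (Suc i) = c (Suc i)" if "i \<le> n" for i
  proof -
    have "q i - \<zeta> * q (Suc i) = w n (Suc i) * (b i - \<zeta> * b (Suc i))"
      unfolding q_def by (rule q_rec[OF that])
    also have "b i - \<zeta> * b (Suc i) = taylor_coeff f (Suc i)"
      unfolding b_def by (rule rep_coeffs[OF gh rep, symmetric])
    finally show ?thesis unfolding c_def .
  qed
  have ident: "f z - (\<Sum>k\<le>n. w n k * taylor_coeff f k * z ^ k) = (a - (c 0 + \<zeta> * q 0)) + (z - \<zeta>) * h z"
    if z: "z \<in> ball 0 1" for z
  proof -
    have "(\<Sum>k\<le>n. w n k * taylor_coeff f k * z ^ k) = (\<Sum>j\<le>Suc n. c j * z ^ j)"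
      using wz[of "Suc n"] by (simp add: c_def)
    also have "\<dots> = (c 0 + \<zeta> * q 0) + (z - \<zeta>) * (\<Sum>i\<le>n. q i * z ^ i)"
      by (rule poly_id) (use rec qz in auto)
    finally show ?thesis using rep z by (simp add: h_def algebra_simps)
  qed
  have "H2_normsq h = (\<Sum>i. (norm (eE w n \<zeta> (taylor_coeff g) i))\<^sup>2)"
    unfolding H2_normsq_def tch b_def ..
  then show ?thesis using hH2 ident by blast
qed


lemma le_mult_INF:
  fixes F c :: ennreal
  assumes c: "0 < c" "c < \<infinity>" and le: "\<And>x. x \<in> S \<Longrightarrow> F \<le> c * f x"
  shows "F \<le> c * (INF x\<in>S. f x)"
proof -
  have "F / c \<le> (INF x\<in>S. f x)"
    using le c by (intro INF_greatest divide_le_posI_ennreal) auto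
  then have "c * (F / c) \<le> c * (INF x\<in>S. f x)" by (rule mult_left_mono) simp
  moreover have "c * (F / c) = F"
    using c ennreal_mult_divide_eq[of c F] by (simp add: ennreal_times_divide mult.commute)
  ultimately show ?thesis by simp
qed

theorem theorem1:
  fixes w :: "nat \<Rightarrow> nat \<Rightarrow> complex" and L M :: real
    and f :: "complex \<Rightarrow> complex" and \<mu> :: "complex measure"
  assumes w_zero: "\<And>n k. k > n \<Longrightarrow> w n k = 0"
    and w_lim: "\<And>k. (\<lambda>n. w n k) \<longlonglongrightarrow> 1"
    and w_bdd: "\<And>n k. norm (w n k) \<le> M"
    and w_lip: "\<And>n k. n \<ge> 1 \<Longrightarrow> norm (w n k - w n (Suc k)) \<le> L / real n"
    and f_hol: "f holomorphic_on ball 0 1"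
    and mu_sets: "sets \<mu> = sets (restrict_space borel (cball (0::complex) 1))"
    and mu_fin: "finite_measure \<mu>"
    and f_in: "dirichlet_mu \<mu> f < \<infinity>"
  shows "(\<lambda>n. Dmu_normsq \<mu>
            (\<lambda>z. f z - (\<Sum>k\<le>n. w n k * taylor_coeff f k * z ^ k))) \<longlonglongrightarrow> 0"
proof -
  define P where "P n z = (\<Sum>k\<le>n. w n k * taylor_coeff f k * z ^ k)" for n z
  define F where "F n \<zeta> = local_dirichlet \<zeta> (\<lambda>z. f z - P n z)" for n \<zeta>
  define G where "G \<zeta> = local_dirichlet \<zeta> f" for \<zeta>
  define C0 where "C0 = 2 * (1 + M)\<^sup>2 + 8 * L\<^sup>2"
  define Cc where "Cc = ennreal (C0 + 1)"
  have C00: "C0 \<ge> 0" unfolding C0_def by simp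
  have Cc: "0 < Cc" "Cc < \<infinity>" unfolding Cc_def using C00 by (auto simp: add_nonneg_pos)
  have space: "space \<mu> = cball 0 1"
    using sets_eq_imp_space_eq[OF mu_sets] by (simp add: space_restrict_space)
  have P0: "P n 0 = w n 0 * f 0" for n
  proof -
    have "P n 0 = (\<Sum>k\<le>n. if k = 0 then w n k * taylor_coeff f k else 0)"
      unfolding P_def by (intro sum.cong) auto
    also have "\<dots> = w n 0 * taylor_coeff f 0" by (simp add: sum.delta)
    finally show ?thesis by (simp add: taylor_coeff_def)
  qed
  have part1: "(\<lambda>n. ennreal ((norm (f 0 - P n 0))\<^sup>2)) \<longlonglongrightarrow> 0"
  proof -
    have "(\<lambda>n. (norm ((1 - w n 0) * f 0))\<^sup>2) \<longlonglongrightarrow> (norm ((1 - 1) * f 0))\<^sup>2"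
      by (intro tendsto_intros w_lim)
    then have "(\<lambda>n. (norm (f 0 - P n 0))\<^sup>2) \<longlonglongrightarrow> 0"
      by (simp add: P0 algebra_simps)
    then have "(\<lambda>n. ennreal ((norm (f 0 - P n 0))\<^sup>2)) \<longlonglongrightarrow> ennreal 0" by (rule tendsto_ennrealI)
    then show ?thesis by simp
  qed
  have Gfin: "integral\<^sup>N \<mu> G < \<infinity>" using f_in unfolding dirichlet_mu_def G_def by simp
  have part2: "(\<lambda>n. integral\<^sup>N \<mu> (F (Suc n))) \<longlonglongrightarrow> 0"
  proof (rule inner_dom_conv[where G="\<lambda>\<zeta>. Cc * G \<zeta>"])
    show "integral\<^sup>N \<mu> (\<lambda>\<zeta>. Cc * G \<zeta>) < \<infinity>"
    proof -
      have "Cc * integral\<^sup>N \<mu> G < \<infinity>" using Cc Gfin by (simp add: ennreal_mult_less_top)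
      then show ?thesis using nn_integral_cmult_le[OF Cc, of \<mu> G] by (rule le_less_trans[rotated])
    qed
  next
    fix n \<zeta> assume "\<zeta> \<in> space \<mu>"
    then have z: "norm \<zeta> \<le> 1" using space by auto
    show "F (Suc n) \<zeta> \<le> Cc * G \<zeta>"
      unfolding G_def local_dirichlet_def
    proof (rule le_mult_INF[OF Cc])
      fix g assume g: "g \<in> {g. in_H2 g \<and> (\<exists>a. \<forall>z\<in>ball 0 1. f z = a + (z - \<zeta>) * g z)}"
      then obtain a where gH: "in_H2 g" and rep: "\<forall>z\<in>ball 0 1. f z = a + (z - \<zeta>) * g z" by auto
      obtain h where hH: "in_H2 h" and hrep: "\<exists>a'. \<forall>z\<in>ball 0 1.
             f z - (\<Sum>k\<le>Suc n. w (Suc n) k * taylor_coeff f k * z ^ k) = a' + (z - \<zeta>) * h z"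
        and hn: "H2_normsq h = (\<Sum>i. (norm (eE w (Suc n) \<zeta> (taylor_coeff g) i))\<^sup>2)"
        using key[where n="Suc n" and w=w and g=g and f=f and \<zeta>=\<zeta> and a=a, OF w_zero gH rep] by blast
      have h1: "F (Suc n) \<zeta> \<le> ennreal (H2_normsq h)"
        unfolding F_def local_dirichlet_def P_def using hH hrep by (intro INF_lower) auto
      have h2: "H2_normsq h \<le> C0 * H2_normsq g"
      proof -
        have "(\<Sum>i. (norm (eE w (Suc n) \<zeta> (taylor_coeff g) i))\<^sup>2) \<le> C0 * (\<Sum>k. (norm (taylor_coeff g k))\<^sup>2)"
          unfolding C0_def using gH unfolding in_H2_def
          by (intro eE_bound(2)[of "Suc n" w M L]) (use w_lip[of "Suc n"] in \<open>auto intro: w_zero w_bdd z\<close>)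
        then show ?thesis unfolding hn by (simp add: H2_normsq_def)
      qed
      have Hg0: "H2_normsq g \<ge> 0" using gH unfolding in_H2_def H2_normsq_def by (auto intro: suminf_nonneg)
      have "C0 * H2_normsq g \<le> (C0 + 1) * H2_normsq g"
        using Hg0 by (simp add: mult_right_mono)
      with h2 have "H2_normsq h \<le> (C0 + 1) * H2_normsq g" by linarith
      with h1 have "F (Suc n) \<zeta> \<le> ennreal ((C0 + 1) * H2_normsq g)"
        using ennreal_leI order_trans by blast
      also have "\<dots> = Cc * ennreal (H2_normsq g)"
        unfolding Cc_def by (rule ennreal_mult) (use C00 Hg0 in auto)
      finally show "F (Suc n) \<zeta> \<le> Cc * ennreal (H2_normsq g)" .
    qed
  next
    fix \<zeta> assume zs: "\<zeta> \<in> space \<mu>" and fin: "Cc * G \<zeta> < \<infinity>"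
    then have z: "norm \<zeta> \<le> 1" using space by auto
    have "G \<zeta> \<noteq> \<infinity>" using fin Cc by (auto simp: ennreal_mult_top split: if_splits)
    have ne: "{g. in_H2 g \<and> (\<exists>a. \<forall>z\<in>ball 0 1. f z = a + (z - \<zeta>) * g z)} \<noteq> {}"
    proof
      assume "{g. in_H2 g \<and> (\<exists>a. \<forall>z\<in>ball 0 1. f z = a + (z - \<zeta>) * g z)} = {}"
      then have "G \<zeta> = \<infinity>" unfolding G_def local_dirichlet_def by simp
      then show False using \<open>G \<zeta> \<noteq> \<infinity>\<close> by simp
    qed
    then obtain g where g: "g \<in> {g. in_H2 g \<and> (\<exists>a. \<forall>z\<in>ball 0 1. f z = a + (z - \<zeta>) * g z)}" by blast
    then obtain a where gH: "in_H2 g" and rep: "\<forall>z\<in>ball 0 1. f z = a + (z - \<zeta>) * g z" by auto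
    have bound: "F (Suc n) \<zeta> \<le> ennreal (\<Sum>i. (norm (eE w (Suc n) \<zeta> (taylor_coeff g) i))\<^sup>2)" for n
    proof -
      obtain h where hH: "in_H2 h" and hrep: "\<exists>a'. \<forall>z\<in>ball 0 1.
             f z - (\<Sum>k\<le>Suc n. w (Suc n) k * taylor_coeff f k * z ^ k) = a' + (z - \<zeta>) * h z"
        and hn: "H2_normsq h = (\<Sum>i. (norm (eE w (Suc n) \<zeta> (taylor_coeff g) i))\<^sup>2)"
        using key[where n="Suc n" and w=w and g=g and f=f and \<zeta>=\<zeta> and a=a, OF w_zero gH rep] by blast
      show ?thesis unfolding hn[symmetric]
        unfolding F_def local_dirichlet_def P_def using hH hrep by (intro INF_lower) auto
    qed
    have "(\<lambda>n. \<Sum>i. (norm (eE w n \<zeta> (taylor_coeff g) i))\<^sup>2) \<longlonglongrightarrow> 0"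
      using gH unfolding in_H2_def
      by (intro eE_lim[where w=w and M=M and L=L and z=\<zeta> and b="taylor_coeff g"] w_zero w_bdd w_lip w_lim z) auto
    then have "(\<lambda>n. \<Sum>i. (norm (eE w (Suc n) \<zeta> (taylor_coeff g) i))\<^sup>2) \<longlonglongrightarrow> 0"
      by (rule LIMSEQ_Suc)
    then have hl: "(\<lambda>n. ennreal (\<Sum>i. (norm (eE w (Suc n) \<zeta> (taylor_coeff g) i))\<^sup>2)) \<longlonglongrightarrow> ennreal 0"
      by (rule tendsto_ennrealI)
    show "(\<lambda>n. F (Suc n) \<zeta>) \<longlonglongrightarrow> 0"
    proof (rule tendsto_sandwich[where f="\<lambda>_. 0" and h="\<lambda>n. ennreal (\<Sum>i. (norm (eE w (Suc n) \<zeta> (taylor_coeff g) i))\<^sup>2)"])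
      show "eventually (\<lambda>n. F (Suc n) \<zeta> \<le> ennreal (\<Sum>i. (norm (eE w (Suc n) \<zeta> (taylor_coeff g) i))\<^sup>2)) sequentially"
        using bound by simp
    qed (use hl in simp_all)
  qed
  then have part2': "(\<lambda>n. integral\<^sup>N \<mu> (F n)) \<longlonglongrightarrow> 0"
    by (rule LIMSEQ_imp_Suc)
  have "(\<lambda>n. ennreal ((norm (f 0 - P n 0))\<^sup>2) + integral\<^sup>N \<mu> (F n)) \<longlonglongrightarrow> 0 + 0"
    by (intro tendsto_add part1 part2')
  then show ?thesis
    unfolding Dmu_normsq_def dirichlet_mu_def F_def P_def by simp
qed

end
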